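(* For all $n\in\mathbb N$ the following holds in the $q$-shuffle algebra $\mathbb V$: $$0=\sum_{i=0}^n(-1)^i[2n-i]_q\,C_i\star\tilde G_{n-i}.$$
   Context: Let $\mathbb F$ be a field and let $q\in\mathbb F$ be nonzero and not a root of unity. Let $[m]_q=(q^m-q^{-m})/(q-q^{-1})$ for $m\in\mathbb Z$. Let $\mathbb V$ be the free associative $\mathbb F$-algebra on noncommuting $x,y$, with basis the words (including $1$). Juxtaposition denotes concatenation. Set $\langle x,x\rangle=\langle y,y\rangle=2$ and $\langle x,y\rangle=\langle y,x\rangle=-2$. The $q$-shuffle product $\star$ is the bilinear product determined as follows: - $1\star v=v\star 1=v$; - for nontrivial words $u=u_1\cdots u_r$ and $v=v_1\cdots v_s$, $$u\star v=u_1((u_2\cdots u_r)\star v)+v_1(u\star(v_2\cdots v_s))q^{\langle u_1,v_1\rangle+\cdots+\langle u_r,v_1\rangle}.$$ This makes $\mathbb V$ an associative algebra, the $q$-shuffle algebra. For $k\in\mathbb N$, let $\tilde G_k=xyxy\cdots xy$ be the word of length $2k$, with $\tilde G_0=1$. Let $\overline x=1$ and $\overline y=-1$. A word $v_1\cdots v_m$ is Catalan if $\overline v_1+\cdots+\overline v_i\ge0$ for $1\le i\le m-1$ and $\overline v_1+\cdots+\overline v_m=0$. For $n\in\mathbb N$, $$C_n=\sum v_1\cdots v_{2n}\,[1]_q[1+\overline v_1]_q\cdots[1+\overline v_1+\cdots+\overline v_{2n}]_q,$$ where the sum is over Catalan words of length $2n$ (so $C_0=1$). *)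

theory Defs
  imports Complex_Main "HOL-Library.Poly_Mapping"
begin

text \<open>Letters x, y; words are lists of letters; the free algebra V is the space of
  finitely supported F-valued functions on words (basis = words).\<close>

datatype letter = X | Y

type_synonym word = "letter list"

type_synonym 'a vv = "word \<Rightarrow>\<^sub>0 'a"

fun bform :: "letter \<Rightarrow> letter \<Rightarrow> int" where
  "bform X X = 2"
| "bform Y Y = 2"
| "bform X Y = -2"
| "bform Y X = -2"

definition smul :: "'a::field \<Rightarrow> 'a vv \<Rightarrow> 'a vv" where
  "smul c p = Poly_Mapping.map (\<lambda>t. c * t) p"

definition prep :: "letter \<Rightarrow> 'a::field vv \<Rightarrow> 'a vv" where
  "prep a p = (\<Sum>w\<in>Poly_Mapping.keys p. Poly_Mapping.single (a # w) (Poly_Mapping.lookup p w))"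

function wsh :: "'a::field \<Rightarrow> word \<Rightarrow> word \<Rightarrow> 'a vv" where
  "wsh q [] v = Poly_Mapping.single v 1"
| "wsh q (a # u) [] = Poly_Mapping.single (a # u) 1"
| "wsh q (a # u) (b # v) =
     prep a (wsh q u (b # v))
     + smul (q powi (sum_list (map (\<lambda>c. bform c b) (a # u)))) (prep b (wsh q (a # u) v))"
  by pat_completeness auto
termination
  by (relation "measure (\<lambda>(q, u, v). length u + length v)") auto

definition qstar :: "'a::field \<Rightarrow> 'a vv \<Rightarrow> 'a vv \<Rightarrow> 'a vv" where
  "qstar q f g = (\<Sum>u\<in>Poly_Mapping.keys f. \<Sum>v\<in>Poly_Mapping.keys g. smul (Poly_Mapping.lookup f u * Poly_Mapping.lookup g v) (wsh q u v))"

definition qint :: "'a::field \<Rightarrow> int \<Rightarrow> 'a" where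
  "qint q m = (q powi m - q powi (- m)) / (q - inverse q)"

definition Gt :: "nat \<Rightarrow> word" where
  "Gt k = concat (replicate k [X, Y])"

definition bar :: "letter \<Rightarrow> int" where
  "bar c = (if c = X then 1 else -1)"

definition psum :: "word \<Rightarrow> nat \<Rightarrow> int" where
  "psum w i = sum_list (map bar (take i w))"

definition catalan :: "word \<Rightarrow> bool" where
  "catalan w \<longleftrightarrow> (\<forall>i\<in>{1..<length w}. psum w i \<ge> 0) \<and> psum w (length w) = 0"

definition Cn :: "'a::field \<Rightarrow> nat \<Rightarrow> 'a vv" where
  "Cn q n = (\<Sum>w\<in>{w. length w = 2 * n \<and> catalan w}.
               Poly_Mapping.single w (\<Prod>i\<in>{0..2 * n}. qint q (1 + psum w i)))"

end

theory Submission
  imports Defs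
begin

lemma lookup_smul [simp]: "Poly_Mapping.lookup (smul c p) w = c * Poly_Mapping.lookup p w"
  by (simp add: smul_def Poly_Mapping.map.rep_eq when_def)

lemma lookup_prep_Nil [simp]: "Poly_Mapping.lookup (prep a p) [] = 0"
  by (simp add: prep_def lookup_sum lookup_single when_def)

lemma lookup_prep_Cons [simp]:
  "Poly_Mapping.lookup (prep a p) (b # w) = (if a = b then Poly_Mapping.lookup p w else 0)"
proof -
  have "Poly_Mapping.lookup (prep a p) (b # w) =
    (\<Sum>v\<in>Poly_Mapping.keys p. (if v = w \<and> a = b then Poly_Mapping.lookup p v else 0))"
    by (simp add: prep_def lookup_sum lookup_single when_def) (metis)
  also have "\<dots> = (if a = b then Poly_Mapping.lookup p w else 0)"
    by (auto simp: sum.delta in_keys_iff)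
  finally show ?thesis .
qed

definition hs :: "word \<Rightarrow> int" where "hs w = sum_list (map bar w)"

lemma hs_simps [simp]: "hs [] = 0" "hs (a # w) = bar a + hs w"
  by (simp_all add: hs_def)

lemma bform_bar: "bform c b = 2 * bar c * bar b"
  by (cases c; cases b) (simp_all add: bar_def)

lemma sum_bform: "sum_list (map (\<lambda>c. bform c b) u) = 2 * bar b * hs u"
  by (induction u) (simp_all add: bform_bar algebra_simps)

lemma wsh_Nil_right [simp]: "wsh q u [] = Poly_Mapping.single u 1"
  by (cases u) simp_all

lemma wsh_Nil_lookup: "Poly_Mapping.lookup (wsh q u v) [] = (if u = [] \<and> v = [] then 1 else 0)"
  by (cases "(q,u,v)" rule: wsh.cases) (auto simp: lookup_single when_def lookup_add)

lemma wsh_Cons_lookup: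
  "Poly_Mapping.lookup (wsh q u v) (a # w) =
     (case u of [] \<Rightarrow> 0 | b # u' \<Rightarrow> if b = a then Poly_Mapping.lookup (wsh q u' v) w else 0)
   + (case v of [] \<Rightarrow> 0 | b # v' \<Rightarrow> if b = a then q powi (2 * bar a * hs u) * Poly_Mapping.lookup (wsh q u v') w else 0)"
  apply (cases u; cases v)
     apply (simp_all only: wsh.simps wsh_Nil_right sum_bform list.case)
  by (auto simp: lookup_single when_def lookup_add algebra_simps split: list.splits)

lemma UNIV_letter: "(UNIV :: letter set) = {X, Y}"
  using letter.exhaust by auto

lemma finite_len: "finite {w :: word. length w = n}"
proof -
  have "finite {w :: word. set w \<subseteq> UNIV \<and> length w = n}"
    by (rule finite_lists_length_eq) (simp add: UNIV_letter)
  then show ?thesis by simp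
qed

definition dv :: "letter \<Rightarrow> 'a::field vv \<Rightarrow> 'a vv" where
  "dv a f = Abs_poly_mapping (\<lambda>w. Poly_Mapping.lookup f (a # w))"

lemma lookup_dv [simp]: "Poly_Mapping.lookup (dv a f) w = Poly_Mapping.lookup f (a # w)"
proof -
  have "{w. Poly_Mapping.lookup f (a # w) \<noteq> 0} = Cons a -` {k. Poly_Mapping.lookup f k \<noteq> 0}"
    by auto
  then have "finite {w. Poly_Mapping.lookup f (a # w) \<noteq> 0}"
    by (metis finite_lookup finite_vimageI inj_on_Cons1)
  then show ?thesis by (simp add: dv_def)
qed

definition pair :: "'a::field vv \<Rightarrow> (word \<Rightarrow> 'a) \<Rightarrow> 'a" where
  "pair f \<phi> = (\<Sum>u\<in>Poly_Mapping.keys f. Poly_Mapping.lookup f u * \<phi> u)"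

lemma pair_superset:
  assumes "finite S" "Poly_Mapping.keys f \<subseteq> S"
  shows "pair f \<phi> = (\<Sum>u\<in>S. Poly_Mapping.lookup f u * \<phi> u)"
  unfolding pair_def using assms by (intro sum.mono_neutral_left) (auto simp: in_keys_iff)

lemma pair_add: "pair f (\<lambda>u. \<phi> u + \<psi> u) = pair f \<phi> + pair f \<psi>"
  by (simp add: pair_def sum.distrib algebra_simps)

lemma pair_cmult: "pair f (\<lambda>u. c * \<phi> u) = c * pair f \<phi>"
  by (simp add: pair_def sum_distrib_left algebra_simps)

lemma pair_cong: "(\<And>u. u \<in> Poly_Mapping.keys f \<Longrightarrow> \<phi> u = \<psi> u) \<Longrightarrow> pair f \<phi> = pair f \<psi>"
  by (simp add: pair_def)

lemma pair_zero_fun: "pair f (\<lambda>u. 0) = 0"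
  by (simp add: pair_def)

lemma pair_zero [simp]: "pair 0 \<phi> = 0"
  by (simp add: pair_def)

lemma pair_smul [simp]: "pair (smul c f) \<phi> = c * pair f \<phi>"
proof -
  have "pair (smul c f) \<phi> = (\<Sum>u\<in>Poly_Mapping.keys f. Poly_Mapping.lookup (smul c f) u * \<phi> u)"
    by (rule pair_superset) (auto simp: in_keys_iff)
  then show ?thesis by (simp add: pair_def sum_distrib_left algebra_simps)
qed

lemma keys_dv: "Poly_Mapping.keys (dv a f) = {u. a # u \<in> Poly_Mapping.keys f}"
  by (auto simp: in_keys_iff)

lemma pair_cons:
  "pair f \<phi> = Poly_Mapping.lookup f [] * \<phi> [] + pair (dv X f) (\<lambda>u. \<phi> (X # u))
     + pair (dv Y f) (\<lambda>u. \<phi> (Y # u))"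
proof -
  let ?KX = "Poly_Mapping.keys (dv X f)" and ?KY = "Poly_Mapping.keys (dv Y f)"
  let ?g = "\<lambda>u. Poly_Mapping.lookup f u * \<phi> u"
  have fin: "finite ?KX" "finite ?KY" by simp_all
  have sub: "Poly_Mapping.keys f \<subseteq> ({[]} \<union> Cons X ` ?KX) \<union> Cons Y ` ?KY"
  proof
    fix u assume "u \<in> Poly_Mapping.keys f"
    then show "u \<in> ({[]} \<union> Cons X ` ?KX) \<union> Cons Y ` ?KY"
      proof (cases u)
      case (Cons a v) then show ?thesis using \<open>u \<in> Poly_Mapping.keys f\<close> by (cases a) (auto simp: keys_dv)
    qed simp
  qed
  have "pair f \<phi> = sum ?g (({[]} \<union> Cons X ` ?KX) \<union> Cons Y ` ?KY)"
    using sub fin by (intro pair_superset) auto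
  also have "\<dots> = sum ?g ({[]} \<union> Cons X ` ?KX) + sum ?g (Cons Y ` ?KY)"
    using fin by (intro sum.union_disjoint) auto
  also have "sum ?g ({[]} \<union> Cons X ` ?KX) = sum ?g {[]} + sum ?g (Cons X ` ?KX)"
    using fin by (intro sum.union_disjoint) auto
  also have "sum ?g (Cons X ` ?KX) = pair (dv X f) (\<lambda>u. \<phi> (X # u))"
    by (simp add: sum.reindex pair_def)
  also have "sum ?g (Cons Y ` ?KY) = pair (dv Y f) (\<lambda>u. \<phi> (Y # u))"
    by (simp add: sum.reindex pair_def)
  finally show ?thesis by simp
qed

fun valid :: "int \<Rightarrow> word \<Rightarrow> bool" where
  "valid h [] = (h = 0)"
| "valid h (a # w) = (0 \<le> h \<and> valid (h + bar a) w)"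

fun wt :: "'a::field \<Rightarrow> int \<Rightarrow> word \<Rightarrow> 'a" where
  "wt q h [] = qint q (1 + h)"
| "wt q h (a # w) = qint q (1 + h) * wt q (h + bar a) w"

lemma valid_nonneg: "valid h w \<Longrightarrow> 0 \<le> h"
  by (cases w) auto

lemma bar_ge: "bar a \<ge> -1" by (simp add: bar_def)

lemma valid_len: "valid h w \<Longrightarrow> h \<le> int (length w)"
proof (induction w arbitrary: h)
  case (Cons a w)
  then have "h + bar a \<le> int (length w)" by simp
  then show ?case using bar_ge[of a] by simp
qed simp

lemma valid_hs: "valid h w \<Longrightarrow> h + hs w = 0"
proof (induction w arbitrary: h)
  case (Cons a w)
  then have "h + bar a + hs w = 0" by simp
  then show ?case by simp
qed simp

definition Dd :: "'a::field \<Rightarrow> nat \<Rightarrow> nat \<Rightarrow> 'a vv" where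
  "Dd q h j = Abs_poly_mapping (\<lambda>w. if length w = h + 2 * j \<and> valid (int h) w then wt q (int h) w else 0)"

lemma lookup_Dd:
  "Poly_Mapping.lookup (Dd q h j) w = (if length w = h + 2 * j \<and> valid (int h) w then wt q (int h) w else 0)"
proof -
  have "finite {w. (if length w = h + 2 * j \<and> valid (int h) w then wt q (int h) w else 0) \<noteq> 0}"
    by (rule finite_subset[OF _ finite_len[of "h + 2 * j"]]) (auto split: if_splits)
  then show ?thesis by (simp add: Dd_def)
qed

lemma keys_Dd: "u \<in> Poly_Mapping.keys (Dd q h j) \<Longrightarrow> valid (int h) u"
  by (auto simp: in_keys_iff lookup_Dd split: if_splits)

lemma Dd_Nil: "Poly_Mapping.lookup (Dd q h j) [] = (if h = 0 \<and> j = 0 then qint q 1 else 0)"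
  by (auto simp: lookup_Dd)

lemma bar_X [simp]: "bar X = 1" and bar_Y [simp]: "bar Y = -1"
  by (simp_all add: bar_def)

lemma dv_X_Dd: "dv X (Dd q h j) = (if j > 0 then smul (qint q (1 + int h)) (Dd q (h + 1) (j - 1)) else 0)"
proof (rule poly_mapping_eqI)
  fix w
  show "Poly_Mapping.lookup (dv X (Dd q h j)) w = Poly_Mapping.lookup (if j > 0 then smul (qint q (1 + int h)) (Dd q (h + 1) (j - 1)) else 0) w"
  proof (cases "j > 0")
    case True
    then show ?thesis by (auto simp: lookup_Dd add.commute)
  next
    case False
    have "\<not> (length w + 1 = h \<and> valid (int h + 1) w)"
      using valid_len[of "int h + 1" w] by auto
    with False show ?thesis by (auto simp: lookup_Dd)
  qed
qed

lemma dv_Y_Dd: "dv Y (Dd q h j) = (if h > 0 then smul (qint q (1 + int h)) (Dd q (h - 1) j) else 0)"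
proof (rule poly_mapping_eqI)
  fix w
  show "Poly_Mapping.lookup (dv Y (Dd q h j)) w = Poly_Mapping.lookup (if h > 0 then smul (qint q (1 + int h)) (Dd q (h - 1) j) else 0) w"
  proof (cases "h > 0")
    case True
    have v: "valid (int h) (Y # w) = valid (int (h - 1)) w" using True by (simp add: of_nat_diff)
    have wt: "wt q (int h) (Y # w) = qint q (1 + int h) * wt q (int (h - 1)) w" using True by (simp add: of_nat_diff)
    have l: "(length (Y # w) = h + 2 * j) = (length w = h - 1 + 2 * j)" using True by auto
    show ?thesis by (simp only: True lookup_dv lookup_Dd v wt l lookup_smul if_True) simp
  next
    case False
    then have "\<not> valid (int h + bar Y) w" using valid_nonneg[of "-1" w] by force
    then show ?thesis using False by (simp add: lookup_Dd)
  qed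
qed

lemma pair_wsh_Cons:
  "pair f (\<lambda>u. Poly_Mapping.lookup (wsh q u v) (a # w)) =
     pair (dv a f) (\<lambda>u. Poly_Mapping.lookup (wsh q u v) w)
   + (case v of [] \<Rightarrow> 0 | b # v' \<Rightarrow> if b = a then pair f (\<lambda>u. q powi (2 * bar a * hs u) * Poly_Mapping.lookup (wsh q u v') w) else 0)"
proof -
  have "pair f (\<lambda>u. Poly_Mapping.lookup (wsh q u v) (a # w)) =
    pair f (\<lambda>u. (case u of [] \<Rightarrow> 0 | b # u' \<Rightarrow> if b = a then Poly_Mapping.lookup (wsh q u' v) w else 0))
    + pair f (\<lambda>u. (case v of [] \<Rightarrow> 0 | b # v' \<Rightarrow> if b = a then q powi (2 * bar a * hs u) * Poly_Mapping.lookup (wsh q u v') w else 0))"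
    by (simp only: wsh_Cons_lookup pair_add)
  also have "pair f (\<lambda>u. (case u of [] \<Rightarrow> 0 | b # u' \<Rightarrow> if b = a then Poly_Mapping.lookup (wsh q u' v) w else 0))
     = pair (dv a f) (\<lambda>u. Poly_Mapping.lookup (wsh q u v) w)"
    by (subst pair_cons) (cases a; simp add: pair_zero_fun)
  also have "pair f (\<lambda>u. (case v of [] \<Rightarrow> 0 | b # v' \<Rightarrow> if b = a then q powi (2 * bar a * hs u) * Poly_Mapping.lookup (wsh q u v') w else 0))
     = (case v of [] \<Rightarrow> 0 | b # v' \<Rightarrow> if b = a then pair f (\<lambda>u. q powi (2 * bar a * hs u) * Poly_Mapping.lookup (wsh q u v') w) else 0)"
    by (cases v) (simp_all add: pair_zero_fun)
  finally show ?thesis .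
qed

lemma pair_Dd_hom:
  "pair (Dd q h j) (\<lambda>u. q powi (2 * bar a * hs u) * \<psi> u) = q powi (- 2 * bar a * int h) * pair (Dd q h j) \<psi>"
proof -
  have "pair (Dd q h j) (\<lambda>u. q powi (2 * bar a * hs u) * \<psi> u) = pair (Dd q h j) (\<lambda>u. q powi (- 2 * bar a * int h) * \<psi> u)"
  proof (rule pair_cong)
    fix u assume "u \<in> Poly_Mapping.keys (Dd q h j)"
    then have "hs u = - int h" using keys_Dd valid_hs by force
    then show "q powi (2 * bar a * hs u) * \<psi> u = q powi (- 2 * bar a * int h) * \<psi> u" by simp
  qed
  then show ?thesis by (simp add: pair_cmult)
qed

lemma Gt_0 [simp]: "Gt 0 = []" and Gt_Suc [simp]: "Gt (Suc k) = X # Y # Gt k"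
  by (simp_all add: Gt_def)

lemma Gt_Nil_iff: "Gt k = [] \<longleftrightarrow> k = 0"
  by (cases k) simp_all

definition FF :: "'a::field \<Rightarrow> nat \<Rightarrow> nat \<Rightarrow> nat \<Rightarrow> word \<Rightarrow> 'a" where
  "FF q h j k w = pair (Dd q h j) (\<lambda>u. Poly_Mapping.lookup (wsh q u (Gt k)) w)"

definition EE :: "'a::field \<Rightarrow> nat \<Rightarrow> nat \<Rightarrow> nat \<Rightarrow> word \<Rightarrow> 'a" where
  "EE q h j k w = pair (Dd q h j) (\<lambda>u. Poly_Mapping.lookup (wsh q u (Y # Gt k)) w)"

lemma pair_Nil: "pair f (\<lambda>u. Poly_Mapping.lookup (wsh q u v) []) = (if v = [] then Poly_Mapping.lookup f [] else 0)"
  by (subst pair_cons) (simp add: wsh_Nil_lookup pair_zero_fun lookup_single when_def)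

lemma FF_Nil: "FF q h j k [] = (if h = 0 \<and> j = 0 \<and> k = 0 then qint q 1 else 0)"
  by (simp add: FF_def pair_Nil Dd_Nil Gt_Nil_iff)

lemma EE_Nil: "EE q h j k [] = 0"
  by (simp add: EE_def pair_Nil)

lemma FF_X: "FF q h j k (X # w) = (if j > 0 then qint q (1 + int h) * FF q (h + 1) (j - 1) k w else 0)
   + (if k > 0 then q powi (- 2 * int h) * EE q h j (k - 1) w else 0)"
  unfolding FF_def EE_def pair_wsh_Cons pair_Dd_hom dv_X_Dd by (cases k) simp_all

lemma FF_Y: "FF q h j k (Y # w) = (if h > 0 then qint q (1 + int h) * FF q (h - 1) j k w else 0)"
  unfolding FF_def EE_def pair_wsh_Cons pair_Dd_hom dv_Y_Dd by (cases k) simp_all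

lemma EE_X: "EE q h j k (X # w) = (if j > 0 then qint q (1 + int h) * EE q (h + 1) (j - 1) k w else 0)"
  unfolding FF_def EE_def pair_wsh_Cons pair_Dd_hom dv_X_Dd by simp

lemma EE_Y: "EE q h j k (Y # w) = (if h > 0 then qint q (1 + int h) * EE q (h - 1) j k w else 0)
   + q powi (2 * int h) * FF q h j k w"
  unfolding FF_def EE_def pair_wsh_Cons pair_Dd_hom dv_Y_Dd by simp



definition AQ :: "'a::field \<Rightarrow> nat \<Rightarrow> nat \<Rightarrow> nat \<Rightarrow> 'a" where
  "AQ q H M j = qint q (int (H + 1)) * (q ^ H * q ^ M * q ^ M / q ^ j) - q ^ j / (q ^ M * q ^ M)"
definition BQ :: "'a::field \<Rightarrow> nat \<Rightarrow> nat \<Rightarrow> nat \<Rightarrow> 'a" where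
  "BQ q H M j = - qint q (int (H + 1)) * (q ^ M * q ^ M * q * q / q ^ j)"
definition AP :: "'a::field \<Rightarrow> nat \<Rightarrow> nat \<Rightarrow> 'a" where
  "AP q H j = q ^ j * q ^ H / q * qint q (int H)"
definition BP :: "'a::field \<Rightarrow> nat \<Rightarrow> nat \<Rightarrow> 'a" where
  "BP q H j = - (q ^ j) * qint q (int (H + 1))"

lemma qint_nat: assumes "(q::'a::field) \<noteq> 0" "q * q - 1 \<noteq> 0"
  shows "qint q (int n) = (q ^ n * q ^ n - 1) * q / ((q * q - 1) * q ^ n)"
proof -
  have d: "q - inverse q = (q * q - 1) / q" using assms by (simp add: field_simps)
  have "qint q (int n) = (q ^ n - inverse (q ^ n)) * q / (q * q - 1)"
    using assms by (simp add: qint_def power_int_minus d)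
  also have "\<dots> = (q ^ n * q ^ n - 1) * q / ((q * q - 1) * q ^ n)"
    using assms by (simp add: field_simps)
  finally show ?thesis .
qed

lemma I3a: assumes "(q::'a::field) \<noteq> 0" "q * q - 1 \<noteq> 0"
  shows "- qint q (int (H + 1)) * AP q H (Suc j) = - qint q (int H) * AP q (H + 1) j"
proof -
  obtain a where a: "q ^ H = a" "a \<noteq> 0" using assms by simp
  obtain b where b: "q ^ M = b" "b \<noteq> 0" using assms by simp
  obtain c where c: "q ^ j = c" "c \<noteq> 0" using assms by simp
  obtain d where d: "q * q - 1 = d" "d \<noteq> 0" using assms by simp
  show ?thesis unfolding AP_def qint_nat[OF assms] d(1) using a b c d(2) assms(1)
    by (simp add: field_simps; simp add: d(1)[symmetric] algebra_simps)
qed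

lemma I3b: assumes "(q::'a::field) \<noteq> 0" "q * q - 1 \<noteq> 0"
  shows "1 / (q ^ H * q ^ H) * AP q H j - qint q (int H) * BP q H (Suc j) = - qint q (int H) * BP q (H + 1) j"
proof -
  obtain a where a: "q ^ H = a" "a \<noteq> 0" using assms by simp
  obtain b where b: "q ^ M = b" "b \<noteq> 0" using assms by simp
  obtain c where c: "q ^ j = c" "c \<noteq> 0" using assms by simp
  obtain d where d: "q * q - 1 = d" "d \<noteq> 0" using assms by simp
  show ?thesis unfolding AP_def BP_def qint_nat[OF assms] d(1) using a b c d(2) assms(1)
    by (simp add: field_simps; simp add: d(1)[symmetric] algebra_simps)
qed

lemma I4a: assumes "(q::'a::field) \<noteq> 0" "q * q - 1 \<noteq> 0"
  shows "qint q (int (Suc H + 1)) * AP q (Suc H) j + q ^ H * q ^ H * BP q (Suc H) j = qint q (int (Suc H + 1)) * AP q H j"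
proof -
  obtain a where a: "q ^ H = a" "a \<noteq> 0" using assms by simp
  obtain b where b: "q ^ M = b" "b \<noteq> 0" using assms by simp
  obtain c where c: "q ^ j = c" "c \<noteq> 0" using assms by simp
  obtain d where d: "q * q - 1 = d" "d \<noteq> 0" using assms by simp
  show ?thesis unfolding AP_def BP_def qint_nat[OF assms] d(1) using a b c d(2) assms(1)
    by (simp add: field_simps; simp add: d(1)[symmetric] algebra_simps)
qed

lemma I4b: assumes "(q::'a::field) \<noteq> 0" "q * q - 1 \<noteq> 0"
  shows "qint q (int (Suc H)) * BP q (Suc H) j = qint q (int (Suc H + 1)) * BP q H j"
proof -
  obtain a where a: "q ^ H = a" "a \<noteq> 0" using assms by simp
  obtain b where b: "q ^ M = b" "b \<noteq> 0" using assms by simp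
  obtain c where c: "q ^ j = c" "c \<noteq> 0" using assms by simp
  obtain d where d: "q * q - 1 = d" "d \<noteq> 0" using assms by simp
  show ?thesis unfolding BP_def qint_nat[OF assms] d(1) using a b c d(2) assms(1)
    by (simp add: field_simps; simp add: d(1)[symmetric] algebra_simps)
qed

lemma I2a: assumes "(q::'a::field) \<noteq> 0" "q * q - 1 \<noteq> 0"
  shows "qint q (int (Suc H + 1)) * AQ q (Suc H) M j + q ^ H * q ^ H * BQ q (Suc H) M j = qint q (int (Suc H + 1)) * AQ q H M j"
proof -
  obtain a where a: "q ^ H = a" "a \<noteq> 0" using assms by simp
  obtain b where b: "q ^ M = b" "b \<noteq> 0" using assms by simp
  obtain c where c: "q ^ j = c" "c \<noteq> 0" using assms by simp
  obtain d where d: "q * q - 1 = d" "d \<noteq> 0" using assms by simp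
  show ?thesis unfolding AQ_def BQ_def qint_nat[OF assms] d(1) using a b c d(2) assms(1)
    by (simp add: field_simps; simp add: d(1)[symmetric] algebra_simps)
qed

lemma I2b: assumes "(q::'a::field) \<noteq> 0" "q * q - 1 \<noteq> 0"
  shows "qint q (int (Suc H)) * BQ q (Suc H) M j = qint q (int (Suc H + 1)) * BQ q H M j"
proof -
  obtain a where a: "q ^ H = a" "a \<noteq> 0" using assms by simp
  obtain b where b: "q ^ M = b" "b \<noteq> 0" using assms by simp
  obtain c where c: "q ^ j = c" "c \<noteq> 0" using assms by simp
  obtain d where d: "q * q - 1 = d" "d \<noteq> 0" using assms by simp
  show ?thesis unfolding BQ_def qint_nat[OF assms] d(1) using a b c d(2) assms(1)
    by (simp add: field_simps; simp add: d(1)[symmetric] algebra_simps)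
qed

lemma I1a: assumes "(q::'a::field) \<noteq> 0" "q * q - 1 \<noteq> 0"
  shows "qint q (int (H + 2)) * (- qint q (int (H + 1)) * AQ q H (Suc M) (Suc j)) = - (qint q (int (H + 1)) * qint q (int (H + 1))) * AQ q (H + 1) M j + 1 / (q ^ M * q ^ M * q * q * q ^ H * q ^ H) * AP q (H + 1) j"
proof -
  obtain a where a: "q ^ H = a" "a \<noteq> 0" using assms by simp
  obtain b where b: "q ^ M = b" "b \<noteq> 0" using assms by simp
  obtain c where c: "q ^ j = c" "c \<noteq> 0" using assms by simp
  obtain d where d: "q * q - 1 = d" "d \<noteq> 0" using assms by simp
  show ?thesis unfolding AQ_def AP_def qint_nat[OF assms] d(1) using a b c d(2) assms(1)
    by (simp add: field_simps; simp add: d(1)[symmetric] algebra_simps)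
qed

lemma I1b: assumes "(q::'a::field) \<noteq> 0" "q * q - 1 \<noteq> 0"
  shows "qint q (int (H + 2)) * (1 / (q ^ H * q ^ H) * AQ q H (Suc M) j - qint q (int H) * BQ q H (Suc M) (Suc j)) = - (qint q (int (H + 1)) * qint q (int (H + 1))) * BQ q (H + 1) M j + 1 / (q ^ M * q ^ M * q * q * q ^ H * q ^ H) * BP q (H + 1) j"
proof -
  obtain a where a: "q ^ H = a" "a \<noteq> 0" using assms by simp
  obtain b where b: "q ^ M = b" "b \<noteq> 0" using assms by simp
  obtain c where c: "q ^ j = c" "c \<noteq> 0" using assms by simp
  obtain d where d: "q * q - 1 = d" "d \<noteq> 0" using assms by simp
  show ?thesis unfolding AQ_def BQ_def BP_def qint_nat[OF assms] d(1) using a b c d(2) assms(1)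
    by (simp add: field_simps; simp add: d(1)[symmetric] algebra_simps)
qed

lemma qint_0 [simp]: "qint q 0 = 0"
  by (simp add: qint_def)

lemma powi_m2: "(q::'a::field) powi (- 2 * int h) = 1 / (q ^ h * q ^ h)"
proof -
  have e: "- 2 * int h = - int (h + h)" by simp
  have "q powi (- 2 * int h) = inverse (q powi int (h + h))"
    by (simp only: e power_int_minus)
  also have "\<dots> = inverse (q ^ h * q ^ h)"
    by (simp only: power_int_of_nat power_add)
  finally show ?thesis by (simp add: divide_inverse)
qed

lemma powi_p2: "(q::'a::field) powi (2 * int h) = q ^ h * q ^ h"
proof -
  have e: "2 * int h = int (h + h)" by simp
  show ?thesis by (simp only: e power_int_of_nat power_add)
qed

lemma one_plus_int: "1 + int h = int (h + 1)" by simp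

lemma FF_X': "FF q h j k (X # w) = (if j > 0 then qint q (int (h + 1)) * FF q (h + 1) (j - 1) k w else 0)
   + (if k > 0 then 1 / (q ^ h * q ^ h) * EE q h j (k - 1) w else 0)"
  by (simp only: FF_X powi_m2 one_plus_int)

lemma FF_Y': "FF q h j k (Y # w) = (if h > 0 then qint q (int (h + 1)) * FF q (h - 1) j k w else 0)"
  by (simp only: FF_Y one_plus_int)

lemma EE_X': "EE q h j k (X # w) = (if j > 0 then qint q (int (h + 1)) * EE q (h + 1) (j - 1) k w else 0)"
  by (simp only: EE_X one_plus_int)

lemma EE_Y': "EE q h j k (Y # w) = (if h > 0 then qint q (int (h + 1)) * EE q (h - 1) j k w else 0)
   + q ^ h * q ^ h * FF q h j k w"
  by (simp only: EE_Y powi_p2 one_plus_int)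

definition Z :: "'a::field \<Rightarrow> nat \<Rightarrow> nat \<Rightarrow> (nat \<Rightarrow> 'a) \<Rightarrow> (nat \<Rightarrow> 'a) \<Rightarrow> word \<Rightarrow> 'a" where
  "Z q H M A B w = (\<Sum>j\<le>M. (-1) ^ j * (A j * FF q H j (M - j) w
      + (if H = 0 then 0 else B j * EE q (H - 1) j (M - j) w)))"

lemma Z_comb:
  assumes "\<And>j. e * A j = c * A1 j + d * A2 j" "\<And>j. e * B j = c * B1 j + d * B2 j"
  shows "e * Z q H M A B w = c * Z q H M A1 B1 w + d * Z q H M A2 B2 w"
proof -
  have "e * Z q H M A B w = (\<Sum>j\<le>M. c * ((-1) ^ j * (A1 j * FF q H j (M - j) w
      + (if H = 0 then 0 else B1 j * EE q (H - 1) j (M - j) w)))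
    + d * ((-1) ^ j * (A2 j * FF q H j (M - j) w
      + (if H = 0 then 0 else B2 j * EE q (H - 1) j (M - j) w))))"
    unfolding Z_def sum_distrib_left
  proof (rule sum.cong)
    fix j
    have "e * ((-1) ^ j * (A j * FF q H j (M - j) w + (if H = 0 then 0 else B j * EE q (H - 1) j (M - j) w)))
      = (-1) ^ j * ((e * A j) * FF q H j (M - j) w + (if H = 0 then 0 else (e * B j) * EE q (H - 1) j (M - j) w))"
      by (simp add: algebra_simps)
    also have "\<dots> = (-1) ^ j * ((c * A1 j + d * A2 j) * FF q H j (M - j) w + (if H = 0 then 0 else (c * B1 j + d * B2 j) * EE q (H - 1) j (M - j) w))"
      by (simp only: assms)
    finally show "e * ((-1) ^ j * (A j * FF q H j (M - j) w + (if H = 0 then 0 else B j * EE q (H - 1) j (M - j) w))) =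
      c * ((-1) ^ j * (A1 j * FF q H j (M - j) w + (if H = 0 then 0 else B1 j * EE q (H - 1) j (M - j) w))) +
      d * ((-1) ^ j * (A2 j * FF q H j (M - j) w + (if H = 0 then 0 else B2 j * EE q (H - 1) j (M - j) w)))"
      by (simp add: algebra_simps)
  qed simp
  also have "\<dots> = c * Z q H M A1 B1 w + d * Z q H M A2 B2 w"
    unfolding Z_def by (simp add: sum.distrib sum_distrib_left)
  finally show ?thesis .
qed

lemma Z_scale:
  assumes "\<And>j. A j = c * A1 j" "\<And>j. B j = c * B1 j"
  shows "Z q H M A B w = c * Z q H M A1 B1 w"
  using Z_comb[of 1 A c A1 0 A1 B B1 B1, OF _ _] assms by simp

lemma Z_Nil: "Z q H M A B [] = (if H = 0 \<and> M = 0 then A 0 * qint q 1 else 0)"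
  by (cases M) (auto simp: Z_def FF_Nil EE_Nil intro!: sum.neutral)

lemma Z_X0: "Z q H 0 A B (X # w) = 0"
  unfolding Z_def atMost_0 by (simp add: FF_X' EE_X')

lemma Z_Y0: "Z q 0 M A B (Y # w) = 0"
  by (simp add: Z_def FF_Y')

lemma Z_YS: "Z q (Suc H) M A B (Y # w) =
  Z q H M (\<lambda>j. qint q (int (Suc H + 1)) * A j + q ^ H * q ^ H * B j) (\<lambda>j. qint q (int (Suc H)) * B j) w"
  unfolding Z_def
proof (rule sum.cong)
  fix j
  show "(-1) ^ j * (A j * FF q (Suc H) j (M - j) (Y # w) + (if Suc H = 0 then 0 else B j * EE q (Suc H - 1) j (M - j) (Y # w))) =
    (-1) ^ j * ((qint q (int (Suc H + 1)) * A j + q ^ H * q ^ H * B j) * FF q H j (M - j) w +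
      (if H = 0 then 0 else qint q (int (Suc H)) * B j * EE q (H - 1) j (M - j) w))"
  proof -
    have f: "FF q (Suc H) j (M - j) (Y # w) = qint q (int (Suc H + 1)) * FF q H j (M - j) w"
      by (simp only: FF_Y') simp
    have e: "EE q H j (M - j) (Y # w) = (if H > 0 then qint q (int (H + 1)) * EE q (H - 1) j (M - j) w else 0)
       + q ^ H * q ^ H * FF q H j (M - j) w"
      by (rule EE_Y')
    show ?thesis using f e
      by (cases "H = 0") (simp_all add: ring_distribs mult.assoc)
  qed
qed simp

lemma Z_XS: "Z q H (Suc M) A B (X # w) =
  Z q (H + 1) M (\<lambda>j. - qint q (int (H + 1)) * A (Suc j))
     (\<lambda>j. 1 / (q ^ H * q ^ H) * A j - qint q (int H) * B (Suc j)) w"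
proof -
  define g1 where "g1 j = (if j > 0 then (-1) ^ j * A j * qint q (int (H + 1)) * FF q (H + 1) (j - 1) (Suc M - j) w else 0)" for j
  define g2 where "g2 j = (if j < Suc M then (-1) ^ j * A j * (1 / (q ^ H * q ^ H)) * EE q H j (M - j) w else 0)" for j
  define g3 where "g3 j = (if j > 0 then (-1) ^ j * B j * qint q (int H) * EE q H (j - 1) (Suc M - j) w else 0)" for j
  have "Z q H (Suc M) A B (X # w) = (\<Sum>j\<le>Suc M. g1 j + g2 j + g3 j)"
    unfolding Z_def
  proof (rule sum.cong)
    fix j assume j: "j \<in> {..Suc M}"
    show "(-1) ^ j * (A j * FF q H j (Suc M - j) (X # w) + (if H = 0 then 0 else B j * EE q (H - 1) j (Suc M - j) (X # w)))
      = g1 j + g2 j + g3 j"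
    proof (cases H)
      case 0
      then show ?thesis using j by (auto simp: g1_def g2_def g3_def FF_X' EE_X' algebra_simps Suc_diff_le)
    next
      case (Suc H')
      then show ?thesis using j by (auto simp: g1_def g2_def g3_def FF_X' EE_X' algebra_simps Suc_diff_le)
    qed
  qed simp
  also have "\<dots> = (\<Sum>j\<le>Suc M. g1 j) + (\<Sum>j\<le>Suc M. g2 j) + (\<Sum>j\<le>Suc M. g3 j)"
    by (simp add: sum.distrib)
  also have "(\<Sum>j\<le>Suc M. g1 j) = (\<Sum>j\<le>M. g1 (Suc j))"
    by (subst sum.atMost_Suc_shift) (simp add: g1_def)
  also have "(\<Sum>j\<le>Suc M. g2 j) = (\<Sum>j\<le>M. g2 j)"
    by (simp add: g2_def)
  also have "(\<Sum>j\<le>Suc M. g3 j) = (\<Sum>j\<le>M. g3 (Suc j))"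
    by (subst sum.atMost_Suc_shift) (simp add: g3_def)
  also have "(\<Sum>j\<le>M. g1 (Suc j)) + (\<Sum>j\<le>M. g2 j) + (\<Sum>j\<le>M. g3 (Suc j)) =
     Z q (H + 1) M (\<lambda>j. - qint q (int (H + 1)) * A (Suc j))
     (\<lambda>j. 1 / (q ^ H * q ^ H) * A j - qint q (int H) * B (Suc j)) w"
    unfolding Z_def sum.distrib[symmetric]
  proof (rule sum.cong)
    fix j assume j: "j \<in> {..M}"
    then show "g1 (Suc j) + g2 j + g3 (Suc j) =
      (-1) ^ j * (- qint q (int (H + 1)) * A (Suc j) * FF q (H + 1) j (M - j) w +
        (if H + 1 = 0 then 0 else (1 / (q ^ H * q ^ H) * A j - qint q (int H) * B (Suc j)) * EE q (H + 1 - 1) j (M - j) w))"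
      by (simp add: g1_def g2_def g3_def algebra_simps Suc_diff_le)
  qed simp
  finally show ?thesis .
qed


lemma qint_one: assumes "(q::'a::field) \<noteq> 0" "q * q - 1 \<noteq> 0" shows "qint q 1 = 1"
proof -
  have "q - inverse q \<noteq> 0"
  proof
    assume "q - inverse q = 0"
    then have "q * (q - inverse q) = 0" by simp
    then have "q * q - 1 = 0" using assms(1) by (simp add: algebra_simps)
    then show False using assms(2) by simp
  qed
  then show ?thesis by (simp add: qint_def power_int_minus)
qed

lemma main_ind:
  assumes q: "(q::'a::field) \<noteq> 0" "q * q - 1 \<noteq> 0"
    and nz: "\<And>n. n > 0 \<Longrightarrow> qint q (int n) \<noteq> 0"
  shows "\<forall>H M. Z q H M (AQ q H M) (BQ q H M) w = 0 \<and> Z q H M (AP q H) (BP q H) w = 0"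
proof (induction w)
  case Nil
  show ?case by (simp add: Z_Nil AQ_def AP_def qint_one[OF q])
next
  case (Cons a w)
  show ?case
  proof (intro allI)
    fix H M
    show "Z q H M (AQ q H M) (BQ q H M) (a # w) = 0 \<and> Z q H M (AP q H) (BP q H) (a # w) = 0"
    proof (cases a)
      case X
      show ?thesis
      proof (cases M)
        case 0
        then show ?thesis using X by (simp add: Z_X0)
      next
        case (Suc M')
        have eQ: "qint q (int (H + 2)) * Z q (H + 1) M' (\<lambda>j. - qint q (int (H + 1)) * AQ q H (Suc M') (Suc j))
             (\<lambda>j. 1 / (q ^ H * q ^ H) * AQ q H (Suc M') j - qint q (int H) * BQ q H (Suc M') (Suc j)) w
          = - (qint q (int (H + 1)) * qint q (int (H + 1))) * Z q (H + 1) M' (AQ q (H + 1) M') (BQ q (H + 1) M') w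
            + 1 / (q ^ M' * q ^ M' * q * q * q ^ H * q ^ H) * Z q (H + 1) M' (AP q (H + 1)) (BP q (H + 1)) w"
          by (rule Z_comb) (rule I1a[OF q], rule I1b[OF q])
        have z1: "Z q (H + 1) M' (\<lambda>j. - qint q (int (H + 1)) * AQ q H (Suc M') (Suc j))
             (\<lambda>j. 1 / (q ^ H * q ^ H) * AQ q H (Suc M') j - qint q (int H) * BQ q H (Suc M') (Suc j)) w = 0"
          using eQ Cons.IH nz[of "H + 2"] by simp
        have z2: "Z q (H + 1) M' (\<lambda>j. - qint q (int (H + 1)) * AP q H (Suc j))
             (\<lambda>j. 1 / (q ^ H * q ^ H) * AP q H j - qint q (int H) * BP q H (Suc j)) w
           = - qint q (int H) * Z q (H + 1) M' (AP q (H + 1)) (BP q (H + 1)) w"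
          by (rule Z_scale) (rule I3a[OF q], rule I3b[OF q])
        show ?thesis using X Suc z1 z2 Cons.IH by (simp add: Z_XS)
      qed
    next
      case Y
      show ?thesis
      proof (cases H)
        case 0
        then show ?thesis using Y by (simp add: Z_Y0)
      next
        case (Suc H')
        have z1: "Z q H' M (\<lambda>j. qint q (int (Suc H' + 1)) * AQ q (Suc H') M j + q ^ H' * q ^ H' * BQ q (Suc H') M j)
             (\<lambda>j. qint q (int (Suc H')) * BQ q (Suc H') M j) w
           = qint q (int (Suc H' + 1)) * Z q H' M (AQ q H' M) (BQ q H' M) w"
          by (rule Z_scale) (rule I2a[OF q], rule I2b[OF q])
        have z2: "Z q H' M (\<lambda>j. qint q (int (Suc H' + 1)) * AP q (Suc H') j + q ^ H' * q ^ H' * BP q (Suc H') j)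
             (\<lambda>j. qint q (int (Suc H')) * BP q (Suc H') j) w
           = qint q (int (Suc H' + 1)) * Z q H' M (AP q H') (BP q H') w"
          by (rule Z_scale) (rule I4a[OF q], rule I4b[OF q])
        show ?thesis using Y Suc z1 z2 Cons.IH by (simp add: Z_YS)
      qed
    qed
  qed
qed


lemma psum_0 [simp]: "psum w 0 = 0"
  by (simp add: psum_def)

lemma psum_Cons_Suc [simp]: "psum (a # w) (Suc i) = bar a + psum w i"
  by (simp add: psum_def)

lemma valid_iff:
  "valid h w \<longleftrightarrow> 0 \<le> h \<and> (\<forall>i. 1 \<le> i \<and> i \<le> length w \<longrightarrow> 0 \<le> h + psum w i) \<and> h + psum w (length w) = 0"
proof (induction w arbitrary: h)
  case Nil
  then show ?case by auto
next
  case (Cons a w)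
  have "valid h (a # w) \<longleftrightarrow> 0 \<le> h \<and> valid (h + bar a) w" by simp
  also have "\<dots> \<longleftrightarrow> 0 \<le> h \<and> (0 \<le> h + bar a \<and> (\<forall>i. 1 \<le> i \<and> i \<le> length w \<longrightarrow> 0 \<le> h + bar a + psum w i)
       \<and> h + bar a + psum w (length w) = 0)"
    using Cons.IH by simp
  also have "\<dots> \<longleftrightarrow> 0 \<le> h \<and> (\<forall>i. 1 \<le> i \<and> i \<le> length (a # w) \<longrightarrow> 0 \<le> h + psum (a # w) i)
       \<and> h + psum (a # w) (length (a # w)) = 0"
  proof -
    have "(0 \<le> h + bar a \<and> (\<forall>i. 1 \<le> i \<and> i \<le> length w \<longrightarrow> 0 \<le> h + bar a + psum w i)) \<longleftrightarrow>
          (\<forall>i. 1 \<le> i \<and> i \<le> length (a # w) \<longrightarrow> 0 \<le> h + psum (a # w) i)"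
    proof
      assume A: "0 \<le> h + bar a \<and> (\<forall>i. 1 \<le> i \<and> i \<le> length w \<longrightarrow> 0 \<le> h + bar a + psum w i)"
      show "\<forall>i. 1 \<le> i \<and> i \<le> length (a # w) \<longrightarrow> 0 \<le> h + psum (a # w) i"
      proof (intro allI impI)
        fix i assume i: "1 \<le> i \<and> i \<le> length (a # w)"
        then obtain i' where i': "i = Suc i'" by (cases i) auto
        show "0 \<le> h + psum (a # w) i"
        proof (cases "i' = 0")
          case True then show ?thesis using A i' by simp
        next
          case False then show ?thesis using A i i' by (simp add: add.assoc)
        qed
      qed
    next
      assume B: "\<forall>i. 1 \<le> i \<and> i \<le> length (a # w) \<longrightarrow> 0 \<le> h + psum (a # w) i"
      have "0 \<le> h + psum (a # w) (Suc 0)" using B[rule_format, of "Suc 0"] by simp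
      then have "0 \<le> h + bar a" by simp
      moreover have "\<forall>i. 1 \<le> i \<and> i \<le> length w \<longrightarrow> 0 \<le> h + bar a + psum w i"
      proof (intro allI impI)
        fix i assume "1 \<le> i \<and> i \<le> length w"
        then have "0 \<le> h + psum (a # w) (Suc i)" using B[rule_format, of "Suc i"] by simp
        then show "0 \<le> h + bar a + psum w i" by (simp add: add.assoc)
      qed
      ultimately show "0 \<le> h + bar a \<and> (\<forall>i. 1 \<le> i \<and> i \<le> length w \<longrightarrow> 0 \<le> h + bar a + psum w i)" by blast
    qed
    moreover have "h + psum (a # w) (length (a # w)) = h + bar a + psum w (length w)" by simp
    ultimately show ?thesis by (simp only:) blast
  qed
  finally show ?case .
qed

lemma catalan_valid: "catalan w \<longleftrightarrow> valid 0 w"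
proof -
  have "catalan w \<longleftrightarrow> (\<forall>i. 1 \<le> i \<and> i \<le> length w \<longrightarrow> 0 \<le> psum w i) \<and> psum w (length w) = 0"
  proof
    assume c: "catalan w"
    then have e: "psum w (length w) = 0" by (simp add: catalan_def)
    have "\<forall>i. 1 \<le> i \<and> i \<le> length w \<longrightarrow> 0 \<le> psum w i"
    proof (intro allI impI)
      fix i assume i: "1 \<le> i \<and> i \<le> length w"
      show "0 \<le> psum w i"
      proof (cases "i = length w")
        case True then show ?thesis using e by simp
      next
        case False then show ?thesis using c i by (simp add: catalan_def)
      qed
    qed
    then show "(\<forall>i. 1 \<le> i \<and> i \<le> length w \<longrightarrow> 0 \<le> psum w i) \<and> psum w (length w) = 0" using e by blast
  next
    assume "(\<forall>i. 1 \<le> i \<and> i \<le> length w \<longrightarrow> 0 \<le> psum w i) \<and> psum w (length w) = 0"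
    then show "catalan w" by (auto simp: catalan_def)
  qed
  then show ?thesis by (simp add: valid_iff)
qed

lemma prod_wt: "(\<Prod>i\<in>{0..length w}. qint q (1 + h + psum w i)) = wt q h w"
proof (induction w arbitrary: h)
  case Nil
  then show ?case by simp
next
  case (Cons a w)
  have "(\<Prod>i\<in>{0..length (a # w)}. qint q (1 + h + psum (a # w) i))
     = qint q (1 + h) * (\<Prod>i\<in>{0..length w}. qint q (1 + (h + bar a) + psum w i))"
  proof -
    have l: "length (a # w) = Suc (length w)" by simp
    show ?thesis unfolding l prod.atLeast0_atMost_Suc_shift by (simp add: o_def add.assoc)
  qed
  also have "\<dots> = wt q h (a # w)" using Cons.IH[of "h + bar a"] by simp
  finally show ?case .
qed

lemma Cn_Dd: "Cn q i = Dd q 0 i"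
proof (rule poly_mapping_eqI)
  fix w
  let ?S = "{w. length w = 2 * i \<and> catalan w}"
  have fin: "finite ?S" by (rule finite_subset[OF _ finite_len[of "2 * i"]]) auto
  have "Poly_Mapping.lookup (Cn q i) w =
     (\<Sum>v\<in>?S. if v = w then (\<Prod>k\<in>{0..2 * i}. qint q (1 + psum v k)) else 0)"
    unfolding Cn_def lookup_sum by (intro sum.cong) (auto simp: lookup_single when_def)
  also have "\<dots> = (if w \<in> ?S then (\<Prod>k\<in>{0..2 * i}. qint q (1 + psum w k)) else 0)"
    using fin by (simp add: sum.delta)
  also have "\<dots> = Poly_Mapping.lookup (Dd q 0 i) w"
  proof (cases "length w = 2 * i \<and> catalan w")
    case True
    then have "(\<Prod>k\<in>{0..2 * i}. qint q (1 + psum w k)) = wt q 0 w"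
      using prod_wt[of q 0 w] by simp
    then show ?thesis using True by (simp add: lookup_Dd catalan_valid)
  next
    case False
    then show ?thesis by (auto simp: lookup_Dd catalan_valid)
  qed
  finally show "Poly_Mapping.lookup (Cn q i) w = Poly_Mapping.lookup (Dd q 0 i) w" .
qed

lemma lookup_qstar_single:
  "Poly_Mapping.lookup (qstar q f (Poly_Mapping.single v 1)) w = pair f (\<lambda>u. Poly_Mapping.lookup (wsh q u v) w)"
  by (simp add: qstar_def lookup_sum pair_def)

lemma AQ_0: assumes q: "(q::'a::field) \<noteq> 0" "q * q - 1 \<noteq> 0" and j: "j \<le> n"
  shows "AQ q 0 n j = (q - inverse q) * qint q (2 * int n - int j)"
proof -
  have d: "q - inverse q \<noteq> 0"
  proof
    assume "q - inverse q = 0"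
    then have "q * (q - inverse q) = 0" by simp
    then have "q * q - 1 = 0" using q(1) by (simp add: algebra_simps)
    then show False using q(2) by simp
  qed
  obtain r where r: "n + n = r + j" using j by (metis le_add2 le_add_diff_inverse2 add_le_mono trans_le_add1 add.commute le_add_diff_inverse)
  have e: "2 * int n - int j = int r" using r by simp
  have p: "q ^ n * q ^ n = q ^ r * q ^ j" using r by (metis power_add)
  have qj: "q ^ j \<noteq> 0" "q ^ r \<noteq> 0" using q by simp_all
  have "(q - inverse q) * qint q (2 * int n - int j) = q ^ r - inverse (q ^ r)"
    using d by (simp add: qint_def e power_int_minus)
  moreover have "AQ q 0 n j = q ^ r - inverse (q ^ r)"
    unfolding AQ_def using qint_one[OF q] p qj by (simp add: field_simps)
  ultimately show ?thesis by simp
qed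

theorem theorem11p14:
  fixes q :: "'a::field" and n :: nat
  assumes "q \<noteq> 0"
    and "\<forall>k::nat. k > 0 \<longrightarrow> q ^ k \<noteq> 1"
  shows "(\<Sum>i\<in>{0..n}. smul ((-1) ^ i * qint q (2 * int n - int i))
            (qstar q (Cn q i) (Poly_Mapping.single (Gt (n - i)) 1))) = 0"
proof -
  have q2: "q * q - 1 \<noteq> 0" using assms(2)[rule_format, of 2] by (simp add: power2_eq_square)
  have q: "q \<noteq> 0" "q * q - 1 \<noteq> 0" using assms(1) q2 by auto
  have d: "q - inverse q \<noteq> 0"
  proof
    assume "q - inverse q = 0"
    then have "q * (q - inverse q) = 0" by simp
    then have "q * q - 1 = 0" using q(1) by (simp add: algebra_simps)
    then show False using q(2) by simp
  qed
  have nz: "qint q (int m) \<noteq> 0" if m: "m > 0" for m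
  proof
    assume "qint q (int m) = 0"
    then have "q ^ m - inverse (q ^ m) = 0" using d by (simp add: qint_def power_int_minus)
    then have "q ^ m * (q ^ m - inverse (q ^ m)) = 0" by simp
    then have "q ^ m * q ^ m = 1" using q(1) by (simp add: algebra_simps)
    then have "q ^ (m + m) = 1" by (simp add: power_add)
    then show False using assms(2) m by auto
  qed
  show ?thesis
  proof (rule poly_mapping_eqI)
    fix w
    have "Poly_Mapping.lookup (\<Sum>i\<in>{0..n}. smul ((-1) ^ i * qint q (2 * int n - int i))
            (qstar q (Cn q i) (Poly_Mapping.single (Gt (n - i)) 1))) w
       = (\<Sum>i\<le>n. (-1) ^ i * qint q (2 * int n - int i) * FF q 0 i (n - i) w)"
      by (simp add: lookup_sum lookup_qstar_single Cn_Dd FF_def atLeast0AtMost)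
    also have "\<dots> = inverse (q - inverse q) * Z q 0 n (AQ q 0 n) (BQ q 0 n) w"
      unfolding Z_def sum_distrib_left
    proof (rule sum.cong)
      fix j assume "j \<in> {..n}"
      then have "j \<le> n" by simp
      then show "(-1) ^ j * qint q (2 * int n - int j) * FF q 0 j (n - j) w =
          inverse (q - inverse q) * ((-1) ^ j * (AQ q 0 n j * FF q 0 j (n - j) w + (if 0 = (0::nat) then 0 else BQ q 0 n j * EE q (0 - 1) j (n - j) w)))"
        using d by (simp add: AQ_0[OF q])
    qed simp
    also have "\<dots> = 0" using main_ind[OF q nz] by simp
    finally show "Poly_Mapping.lookup (\<Sum>i\<in>{0..n}. smul ((-1) ^ i * qint q (2 * int n - int i))
            (qstar q (Cn q i) (Poly_Mapping.single (Gt (n - i)) 1))) w = Poly_Mapping.lookup 0 w" by simp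
  qed
qed

end
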